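(* Let $\Theta$ be a saturated branch of a tableau of $\mathbf{TAB}_{\mathbf{IB}}$ and let $i$ be a quasi-urfather on $\Theta$. If $i\prec_\Theta j$, then $j\in\mathrm{dom}(v_\Theta)$.
   Context: Hybrid language: fix disjoint countably infinite sets $\mathbf{Prop}$ (propositional variables) and $\mathbf{Nom}$ (nominals). Formulas: $\varphi ::= p \mid i \mid \neg\varphi \mid \varphi\land\varphi \mid \Diamond\varphi \mid @_i\varphi$ with $p\in\mathbf{Prop}$, $i\in\mathbf{Nom}$; $\Box\varphi$ abbreviates $\neg\Diamond\neg\varphi$. Tableau calculus $\mathbf{TAB}_{\mathbf{IB}}$. A tableau is a well-founded tree whose nodes are formulas of the form $@_i\varphi$; its root is a formula $@_i\varphi$ (the root formula) where $i$ does not occur in $\varphi$. A branch is a maximal path; $\varphi\in\Theta$ means $\varphi$ occurs on branch $\Theta$. Each branch is extended by applying the rules below to its formulas as often as possible, except that no further formula is added to a branch once either (i) every new formula generated by applying any rule already occurs on the branch, or (ii) the branch is closed, i.e. contains $@_i\varphi$ and $@_i\neg\varphi$ for some formula $\varphi$ and nominal $i$. A branch is saturated if every new formula generated by applying some rule already occurs on it. An accessibility formula is a formula $@_i\Diamond j$ added by rule $[\Diamond]$ (with $j$ the new nominal). Rules (premises already on the branch; conclusions added to it): [$\neg\neg$] from $@_i\neg\neg\varphi$ add $@_i\varphi$; [$\land$] from $@_i(\varphi\land\psi)$ add $@_i\varphi$ and $@_i\psi$; [$\neg\land$] from $@_i\neg(\varphi\land\psi)$ split the branch into one extended by $@_i\neg\varphi$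 and one extended by $@_i\neg\psi$; [$\Diamond$] from $@_i\Diamond\varphi$, which is not an accessibility formula, add $@_i\Diamond j$ and $@_j\varphi$ where $j$ is a nominal not occurring on the branch; this rule is applied at most once per formula, and only if $i$ is a quasi-urfather on the branch (defined below); [$\neg\Diamond$] from $@_i\neg\Diamond\varphi$ and $@_i\Diamond j$ add $@_j\neg\varphi$; [$\Box_{sym}$] from $@_i\Box\varphi$ and $@_j\Diamond i$ add $@_j\varphi$; [$@$] from $@_i@_j\varphi$ add $@_j\varphi$; [$\neg@$] from $@_i\neg@_j\varphi$ add $@_j\neg\varphi$; [$Id$] from $@_i\varphi$, which is not an accessibility formula, and $@_i j$ add $@_j\varphi$; [$Ref$] for any nominal $i$ occurring on the branch add $@_i i$; ($\mathcal{I}$) for any nominal $i$ occurring on the branch add $@_i\neg\Diamond i$. Auxiliary notions for a branch $\Theta$. $@_i\varphi$ is a quasi-subformula of $@_j\psi$ if $\varphi$ is a subformula of $\psi$, or $\varphi=\neg\chi$ with $\chi$ a subformula of $\psi$. For a nominal $i$ occurring in $\Theta$, $T^\Theta(i)=\{\varphi \mid @_i\varphi\in\Theta$ and $@_i\varphi$ is a quasi-subformula of the root formula$\}$. Nominals $i,j$ are twins if $T^\Theta(i)=T^\Theta(j)$. $i\prec_\Theta j$ if $j$ was introduced by applying $[\Diamond]$ to a formula $@_i\Diamond\varphi$ (equivalently, the accessibility formula $@_i\Diamond j$ is in $\Theta$); $\prec_\Theta^*$ is its reflexive transitive closure. A nominal $i$ is a quasi-urfather on $\Theta$ if there are no twins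 $j\neq k$ with $j\prec_\Theta^* i$ and $k\prec_\Theta^* i$. The identity urfather $v_\Theta(i)$ of a nominal $i$ occurring in $\Theta$ is the earliest introduced nominal $j$ on $\Theta$ such that $j$ is a twin of $i$ and $j$ is a quasi-urfather; it may fail to exist, and $\mathrm{dom}(v_\Theta)$ denotes the set of nominals $i$ for which it exists. *)

theory Defs
  imports Main
begin

datatype fm =
    Pro nat
  | Nom nat
  | Neg fm
  | Con fm fm
  | Dia fm
  | At nat fm

abbreviation Box :: "fm \<Rightarrow> fm" where
  "Box \<phi> \<equiv> Neg (Dia (Neg \<phi>))"

fun nomsf :: "fm \<Rightarrow> nat set" where
  "nomsf (Pro p) = {}"
| "nomsf (Nom i) = {i}"
| "nomsf (Neg \<phi>) = nomsf \<phi>"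
| "nomsf (Con \<phi> \<psi>) = nomsf \<phi> \<union> nomsf \<psi>"
| "nomsf (Dia \<phi>) = nomsf \<phi>"
| "nomsf (At i \<phi>) = insert i (nomsf \<phi>)"

fun subfms :: "fm \<Rightarrow> fm set" where
  "subfms (Pro p) = {Pro p}"
| "subfms (Nom i) = {Nom i}"
| "subfms (Neg \<phi>) = insert (Neg \<phi>) (subfms \<phi>)"
| "subfms (Con \<phi> \<psi>) = insert (Con \<phi> \<psi>) (subfms \<phi> \<union> subfms \<psi>)"
| "subfms (Dia \<phi>) = insert (Dia \<phi>) (subfms \<phi>)"
| "subfms (At i \<phi>) = insert (At i \<phi>) (subfms \<phi>)"

text \<open>A (partial) branch is the list of formulas on it, in the order in which
they were added (the head is the root formula), together with the record of
all applications of rule [Dia]: a triple (i, phi, j) means that [Dia] was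
applied to the formula At i (Dia phi), introducing the new nominal j; it added
the accessibility formula At i (Dia (Nom j)) and At j phi.\<close>

type_synonym state = "fm list \<times> (nat \<times> fm \<times> nat) list"

definition F :: "state \<Rightarrow> fm list" where "F st = fst st"
definition D :: "state \<Rightarrow> (nat \<times> fm \<times> nat) list" where "D st = snd st"

definition on :: "fm \<Rightarrow> state \<Rightarrow> bool" where
  "on f st \<longleftrightarrow> f \<in> set (F st)"

definition root :: "state \<Rightarrow> fm" where
  "root st = hd (F st)"

definition noms :: "state \<Rightarrow> nat set" where
  "noms st = (\<Union>f\<in>set (F st). nomsf f)"

definition is_acc :: "state \<Rightarrow> fm \<Rightarrow> bool" where
  "is_acc st f \<longleftrightarrow> (\<exists>i j \<phi>. f = At i (Dia (Nom j)) \<and> (i, \<phi>, j) \<in> set (D st))"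

definition closed :: "state \<Rightarrow> bool" where
  "closed st \<longleftrightarrow> (\<exists>i \<phi>. on (At i \<phi>) st \<and> on (At i (Neg \<phi>)) st)"

definition quasi_sub :: "fm \<Rightarrow> fm \<Rightarrow> bool" where
  "quasi_sub f g \<longleftrightarrow> (\<exists>i \<phi> j \<psi>. f = At i \<phi> \<and> g = At j \<psi> \<and>
      (\<phi> \<in> subfms \<psi> \<or> (\<exists>\<chi>. \<phi> = Neg \<chi> \<and> \<chi> \<in> subfms \<psi>)))"

definition T :: "state \<Rightarrow> nat \<Rightarrow> fm set" where
  "T st i = {\<phi>. on (At i \<phi>) st \<and> quasi_sub (At i \<phi>) (root st)}"

definition twins :: "state \<Rightarrow> nat \<Rightarrow> nat \<Rightarrow> bool" where
  "twins st i j \<longleftrightarrow> i \<in> noms st \<and> j \<in> noms st \<and> T st i = T st j"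

definition prec :: "state \<Rightarrow> nat \<Rightarrow> nat \<Rightarrow> bool" where
  "prec st i j \<longleftrightarrow> (\<exists>\<phi>. (i, \<phi>, j) \<in> set (D st))"

definition quasi_urfather :: "state \<Rightarrow> nat \<Rightarrow> bool" where
  "quasi_urfather st i \<longleftrightarrow> i \<in> noms st \<and>
     \<not> (\<exists>j k. j \<noteq> k \<and> twins st j k \<and> (prec st)\<^sup>*\<^sup>* j i \<and> (prec st)\<^sup>*\<^sup>* k i)"

definition intro_pos :: "state \<Rightarrow> nat \<Rightarrow> nat" where
  "intro_pos st j = (LEAST n. n < length (F st) \<and> j \<in> nomsf (F st ! n))"

definition urf_cand :: "state \<Rightarrow> nat \<Rightarrow> nat \<Rightarrow> bool" where
  "urf_cand st i j \<longleftrightarrow> i \<in> noms st \<and> twins st j i \<and> quasi_urfather st j"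

text \<open>Identity urfather: the earliest introduced twin of i that is a
quasi-urfather (partial; ties among nominals introduced simultaneously in the
root formula are broken arbitrarily).\<close>
definition v :: "state \<Rightarrow> nat \<Rightarrow> nat option" where
  "v st i = (if \<exists>j. urf_cand st i j
             then Some (arg_min (intro_pos st) (urf_cand st i)) else None)"

text \<open>Each rule application is a list of alternatives; each alternative is a
list of formulas added to the branch together with the [Dia]-bookkeeping.
Only [neg-and] has two alternatives (branch split).\<close>

definition apps :: "state \<Rightarrow> ((fm list \<times> (nat \<times> fm \<times> nat) list) list) set" where
  "apps st =
     {[([At i \<phi>], [])] | i \<phi>. on (At i (Neg (Neg \<phi>))) st}
   \<union> {[([At i \<phi>, At i \<psi>], [])] | i \<phi> \<psi>. on (At i (Con \<phi> \<psi>)) st}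
   \<union> {[([At i (Neg \<phi>)], []), ([At i (Neg \<psi>)], [])] | i \<phi> \<psi>. on (At i (Neg (Con \<phi> \<psi>))) st}
   \<union> {[([At i (Dia (Nom j)), At j \<phi>], [(i, \<phi>, j)])] | i \<phi> j.
        on (At i (Dia \<phi>)) st \<and> \<not> is_acc st (At i (Dia \<phi>)) \<and> j \<notin> noms st
        \<and> (\<forall>k. (i, \<phi>, k) \<notin> set (D st)) \<and> quasi_urfather st i}
   \<union> {[([At j (Neg \<phi>)], [])] | i j \<phi>. on (At i (Neg (Dia \<phi>))) st \<and> on (At i (Dia (Nom j))) st}
   \<union> {[([At j \<phi>], [])] | i j \<phi>. on (At i (Box \<phi>)) st \<and> on (At j (Dia (Nom i))) st}
   \<union> {[([At j \<phi>], [])] | i j \<phi>. on (At i (At j \<phi>)) st}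
   \<union> {[([At j (Neg \<phi>)], [])] | i j \<phi>. on (At i (Neg (At j \<phi>))) st}
   \<union> {[([At j \<phi>], [])] | i j \<phi>. on (At i \<phi>) st \<and> \<not> is_acc st (At i \<phi>) \<and> on (At i (Nom j)) st}
   \<union> {[([At i (Nom i)], [])] | i. i \<in> noms st}
   \<union> {[([At i (Neg (Dia (Nom i)))], [])] | i. i \<in> noms st}"

definition saturated :: "state \<Rightarrow> bool" where
  "saturated st \<longleftrightarrow> (\<forall>A\<in>apps st. \<exists>(add, d)\<in>set A. set add \<subseteq> set (F st))"

inductive step :: "state \<Rightarrow> state \<Rightarrow> bool" where
  "\<lbrakk> \<not> closed st; \<not> saturated st; A \<in> apps st; (add, d) \<in> set A \<rbrakk>
   \<Longrightarrow> step st (F st @ add, D st @ d)"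

definition valid_root :: "fm \<Rightarrow> bool" where
  "valid_root r \<longleftrightarrow> (\<exists>i \<phi>. r = At i \<phi> \<and> i \<notin> nomsf \<phi>)"

text \<open>Theta is (an initial segment of) a branch of a TAB_IB tableau.\<close>
definition tab_branch :: "state \<Rightarrow> bool" where
  "tab_branch st \<longleftrightarrow> (\<exists>r. valid_root r \<and> step\<^sup>*\<^sup>* ([r], []) st)"

end

theory Submission
  imports Defs
begin

definition Inv :: "state \<Rightarrow> bool" where
  "Inv st \<longleftrightarrow> (\<forall>a p b. (a,p,b) \<in> set (D st) \<longrightarrow> b \<in> noms st) \<and>
     (\<forall>a p b a' p'. (a,p,b) \<in> set (D st) \<longrightarrow> (a',p',b) \<in> set (D st) \<longrightarrow> a = a')"

lemma apps_d:
  assumes "A \<in> apps st" "(add, d) \<in> set A"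
  shows "d = [] \<or> (\<exists>a p b. d = [(a,p,b)] \<and> b \<notin> noms st \<and> At a (Dia (Nom b)) \<in> set add)"
  using assms unfolding apps_def by auto

lemma noms_app: "noms (xs @ ys, e) = noms (xs, e') \<union> (\<Union>f\<in>set ys. nomsf f)"
  by (auto simp: noms_def F_def)

lemma step_inv:
  assumes "step st st'" "Inv st"
  shows "Inv st'"
  using assms(1)
proof cases
  case (1 A add d)
  have st: "st = (F st, D st)" by (simp add: F_def D_def)
  have N: "noms st' = noms st \<union> (\<Union>f\<in>set add. nomsf f)"
    using 1(1) noms_app[of "F st" add "D st @ d" "D st"] st by simp
  have DD: "D st' = D st @ d" using 1(1) by (simp add: D_def)
  from apps_d[OF 1(4,5)] show ?thesis
  proof
    assume "d = []" then show ?thesis using assms(2) N DD unfolding Inv_def by auto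
  next
    assume "\<exists>a p b. d = [(a,p,b)] \<and> b \<notin> noms st \<and> At a (Dia (Nom b)) \<in> set add"
    then obtain a p b where d: "d = [(a,p,b)]" "b \<notin> noms st" "At a (Dia (Nom b)) \<in> set add" by blast
    have bn: "b \<in> noms st'" using N d(3) by force
    show ?thesis using assms(2) N DD d bn unfolding Inv_def by (auto; metis)
  qed
qed

lemma inv_reach: "step\<^sup>*\<^sup>* s t \<Longrightarrow> Inv s \<Longrightarrow> Inv t"
  by (induction rule: rtranclp_induct) (auto intro: step_inv)

lemma tab_inv: "tab_branch st \<Longrightarrow> Inv st"
proof -
  assume "tab_branch st"
  then obtain r where "step\<^sup>*\<^sup>* ([r], []) st" unfolding tab_branch_def by blast
  moreover have "Inv ([r], [])" by (simp add: Inv_def D_def)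
  ultimately show ?thesis using inv_reach by blast
qed

lemma anc:
  assumes "Inv st" "prec st i j" "(prec st)\<^sup>*\<^sup>* x j"
  shows "x = j \<or> (prec st)\<^sup>*\<^sup>* x i"
  using assms(3)
proof (cases rule: rtranclp.cases)
  case (rtrancl_into_rtrancl y)
  then have "prec st y j" by simp
  then have "y = i" using assms(1,2) unfolding Inv_def prec_def by blast
  then show ?thesis using rtrancl_into_rtrancl by simp
qed simp

theorem lemma6:
  assumes "tab_branch \<Theta>"
    and "saturated \<Theta>"
    and "quasi_urfather \<Theta> i"
    and "prec \<Theta> i j"
  shows "j \<in> dom (v \<Theta>)"
proof -
  have I: "Inv \<Theta>" using assms(1) tab_inv by blast
  have jn: "j \<in> noms \<Theta>" using I assms(4) unfolding Inv_def prec_def by blast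
  have ij: "(prec \<Theta>)\<^sup>*\<^sup>* i j" using assms(4) by simp
  have "\<exists>k. urf_cand \<Theta> j k"
  proof (cases "quasi_urfather \<Theta> j")
    case True
    then show ?thesis using jn unfolding urf_cand_def twins_def by blast
  next
    case False
    then obtain a b where ab: "a \<noteq> b" "twins \<Theta> a b" "(prec \<Theta>)\<^sup>*\<^sup>* a j" "(prec \<Theta>)\<^sup>*\<^sup>* b j"
      using jn unfolding quasi_urfather_def by blast
    have a: "a = j \<or> (prec \<Theta>)\<^sup>*\<^sup>* a i" using anc[OF I assms(4) ab(3)] .
    have b: "b = j \<or> (prec \<Theta>)\<^sup>*\<^sup>* b i" using anc[OF I assms(4) ab(4)] .
    have qi: "\<not> (\<exists>j k. j \<noteq> k \<and> twins \<Theta> j k \<and> (prec \<Theta>)\<^sup>*\<^sup>* j i \<and> (prec \<Theta>)\<^sup>*\<^sup>* k i)"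
      using assms(3) unfolding quasi_urfather_def by blast
    obtain k where k: "twins \<Theta> j k" "(prec \<Theta>)\<^sup>*\<^sup>* k i"
      using a b ab qi unfolding twins_def by metis
    have kn: "k \<in> noms \<Theta>" using k(1) unfolding twins_def by blast
    have "quasi_urfather \<Theta> k"
      unfolding quasi_urfather_def using kn qi k(2)
      by (meson rtranclp_trans)
    then have "urf_cand \<Theta> j k" using jn k(1) unfolding urf_cand_def twins_def by auto
    then show ?thesis by blast
  qed
  then show ?thesis unfolding v_def by auto
qed

end
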